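(* Consider the electric ride-hailing vehicle routing and charging (eRIVER) model described in the context. Suppose that the meeting-probability function $f$ and the charging-waiting-time function $g$ are continuous in the aggregate vehicle flows $(\mathbf{y},\mathbf{z})$. Then there exists at least one mean-field equilibrium of the eRIVER problem, i.e. a mean policy $\bar{\pi}^*\in\Omega$ such that $$\bar{\pi}^* \in \arg\max_{\pi\in\Omega} V_\rho\big(\pi \,\big|\, \mu(\bar{\pi}^* )\big).$$
   Context: Market. Time is discretized into steps $t=0,1,\dots,T-1$ of equal length. There is a finite set $\mathcal{N}$ of service zones and a finite set $\mathcal{L}$ of charging stations, each station having capacity $C$ and charging efficiency $e$. Travel times $\tau_{ij}$ (zone $i$ to zone $j$) and $\tau_{il}$ (zone $i$ to station $l$) are positive integers (in time steps). For each zone $i$, $\mathcal{N}_i$ denotes zone $i$ together with its neighbouring zones and $\mathcal{L}_i$ the stations at the boundary of zone $i$; for each station $l$, $\mathcal{N}_l$ denotes its neighbouring zones. A fleet of $M$ homogeneous electric vehicles operates, each with battery capacity $B$ (an integer); the state of charge (SOC) $b\in\{0,\dots,B\}$ decreases by one unit per time step of driving. A vehicle that starts charging at SOC $b<B$ charges for $\hat{\tau}_b=\lceil (B-b)/e\rceil$ time steps and leaves the station fully charged. Passenger demand $q^t_i\ge 0$ arrives in zone $i$ at time $t$, a fraction $\alpha^t_{ij}$ of which travels to zone $j$ (with $\sum_j\alpha^t_{ij}=1$); $p_{jk}$ is the fare of a trip from $j$ to $k$, $c_l$ the charging price per time step at station $l$, and $\kappa$ a penalty for running out of battery. Aggregate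 flows (nonnegative reals, the fleet being treated as a continuum). $y^t_{i,b}$ = idle vehicles in zone $i$ at time $t$ with SOC $b$; $z^t_{l,b}$ = vehicles arriving at station $l$ at time $t$ with SOC $b$; $\mathbf{y}=\{y^t_{i,b}\}$, $\mathbf{z}=\{z^t_{l,b}\}$. The meeting probability (probability that an idle vehicle in zone $i$ at time $t$ picks up a passenger after one step of search) is $m^t_i=f(q^t_i,y^t_i;\theta^t_i)\in[0,1]$, where $y^t_i=\sum_{b>0}y^t_{i,b}$ and $\theta^t_i$ is a given parameter, with $f$ nondecreasing in $q$ and nonincreasing in $y$. The waiting time $\omega\in\mathbb{N}$ before starting to charge, for a vehicle arriving at station $l$ at time $t$, has probability mass function $w^t_l(\omega)=g(\mathbf{z}_{\le t,l},\omega)$, where $\mathbf{z}_{\le t,l}=\{z^{t'}_{l,b}\}_{t'\le t,b}$, $w^t_l(\omega)\in[0,1]$ and $\sum_\omega w^t_l(\omega)=1$. Individual MDP. States are $s=(t,k,b)$ with $k\in\mathcal{N}\cup\mathcal{L}\cup\{0\}$ ($k=0$ meaning offline after running out of battery). In zone $i$ the feasible actions are $\mathcal{N}_i\cup\mathcal{L}$; a vehicle about to leave station $l$ (with SOC $B$) chooses an action in $\mathcal{N}_l$; an offline vehicle stays offline. Transitions: from $(t,i,b)$ choosing zone $j$, the vehicle fails to find a passenger with probability $1-m^t_j$ and moves to $(t+1,j,b-1)$; with probability $m^t_j\alpha^t_{jk}$ it picks up a passenger to $k$ (reward $p_{jk}$) and, if it has sufficient battery, moves to $(t+1+\tau_{jk},k,b-1-\tau_{jk})$.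 Choosing station $l$, the vehicle travels to $l$, waits $\omega$ steps with probability $w^{t+\tau_{il}}_l(\omega)$, then charges (reward $-c_l\hat{\tau}_{b-\tau_{il}}$) and moves to $(t+\tau_{il}+\omega+\hat{\tau}_{b-\tau_{il}},l,B)$. Running out of battery leads to the offline state with reward $\kappa$ (a large penalty); all other rewards are zero. A policy $\pi$ maps each state to a probability distribution over feasible actions; $\Omega$ is the (compact) set of such policies. Given an initial state distribution $\rho$ and flows $(\mathbf{y},\mathbf{z})$ (which determine the transition probabilities through $m$ and $w$), the value is the undiscounted expected total reward $V_\rho(\pi|\mathbf{y},\mathbf{z})=\mathbb{E}_{s_0\sim\rho}\big[\mathbb{E}_{a\sim\pi(\cdot|s),\,(s,a,s')\sim P(\cdot|\mathbf{y},\mathbf{z})}[\sum_{(s,a,s')}r(s,a,s')\mid s_0]\big]$. Mean policy and flow map $\mu$. The mean policy is $\bar{\pi}=\int_\Omega \pi\,\delta(\pi)\,d\pi$ for a density $\delta$ of policies over the fleet. Let $x^t_{k,b}$ be the flow of vehicles at location $k\in\mathcal{N}\cup\mathcal{L}$ at time $t$ with SOC $b$ about to make a decision, with $x^0_{k,b}=M\rho((0,k,b))$. The flows are generated recursively by $y^t_i=\sum_{k\in\mathcal{N}_i}\sum_{b>0}x^t_{k,b}\,\bar{\pi}(i|(t,k,b))+\sum_{k\in\mathcal{L}_i}x^t_{k,B}\,\bar{\pi}(i|(t,k,B))$ (and correspondingly per SOC $b$), $z^t_l=\sum_{k\in\mathcal{N}}\sum_{b\ge\tau_{kl}}x^{t-\tau_{kl}}_{k,b}\,\bar{\pi}(l|(t-\tau_{kl},k,b))$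 (and correspondingly per SOC), for $k\in\mathcal{N}$: $x^t_{k,b}=(1-m^{t-1}_k)y^{t-1}_{k,b+1}+\sum_{t'=1}^{t}\sum_{i\in\mathcal{N}:\,t=t'+1+\tau_{ik}}\alpha^{t'}_{ik}m^{t'}_i y^{t'}_{i,b+\tau_{ik}}$, for $k\in\mathcal{L}$: $x^t_{k,B}=\sum_b\sum_\omega w^{t-\omega-\hat{\tau}_b}_k(\omega)\,z^{t-\omega-\hat{\tau}_b}_{k,b}$. The resulting map from mean policy to flows is denoted $(\mathbf{y},\mathbf{z})=\mu(\bar{\pi})$. A mean policy $\bar{\pi}^*$ is a mean-field equilibrium (MFE) of eRIVER if $\bar{\pi}^*\in\arg\max_{\pi}V_\rho(\pi|\mu(\bar{\pi}^* ))$. *)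

theory Defs
  imports "HOL-Analysis.Analysis"
begin

text \<open>Locations of the individual MDP: a service zone, a charging station,
  or the offline state (written 0 in the paper).  The same type is used for
  actions: Zone j = go to zone j, Stn l = go to station l, Off = stay offline.\<close>

datatype ('z, 'l) loc = Zone 'z | Stn 'l | Off

lemma UNIV_loc: "(UNIV :: ('z,'l) loc set) = range Zone \<union> range Stn \<union> {Off}"
  proof (intro set_eqI iffI)
  fix x :: "('z,'l) loc"
  show "x \<in> range Zone \<union> range Stn \<union> {Off}" by (cases x) auto
qed auto

instance loc :: (finite, finite) finite
  by standard (simp add: UNIV_loc)

record ('z, 'l, 'th) eriver =
  horizon :: nat                         \<comment> \<open>T; decision epochs t = 0..T-1\<close>
  Bmax    :: nat
  fleet   :: real
  eff     :: real
  tz      :: "'z \<Rightarrow> 'z \<Rightarrow> nat"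
  tl      :: "'z \<Rightarrow> 'l \<Rightarrow> nat"
  nbr     :: "'z \<Rightarrow> 'z set"            \<comment> \<open>N_i: zone i and its neighbouring zones\<close>
  bdry    :: "'l \<Rightarrow> 'z set"
  dem     :: "nat \<Rightarrow> 'z \<Rightarrow> real"
  alpha   :: "nat \<Rightarrow> 'z \<Rightarrow> 'z \<Rightarrow> real"
  fare    :: "'z \<Rightarrow> 'z \<Rightarrow> real"
  cprice  :: "'l \<Rightarrow> real"
  kappa   :: real                        \<comment> \<open>running-out-of-battery reward\<close>
  fmeet   :: "real \<Rightarrow> real \<Rightarrow> 'th \<Rightarrow> real"
  theta   :: "nat \<Rightarrow> 'z \<Rightarrow> 'th"
  gwait   :: "nat \<Rightarrow> (nat \<Rightarrow> nat \<Rightarrow> real) \<Rightarrow> nat \<Rightarrow> real"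
     \<comment> \<open>g(z_{<=t,l}, omega): arguments t, the history (t',b) |-> z^{t'}_{l,b}
        (zero for t' > t or b > B), and omega\<close>
  rho     :: "('z,'l) loc \<Rightarrow> nat \<Rightarrow> real"

type_synonym ('z,'l) policy = "nat \<Rightarrow> ('z,'l) loc \<Rightarrow> nat \<Rightarrow> ('z,'l) loc \<Rightarrow> real"
  \<comment> \<open>pi t k b a = probability of action a in state (t,k,b)\<close>
type_synonym ('z,'l) xflow = "nat \<Rightarrow> ('z,'l) loc \<Rightarrow> nat \<Rightarrow> real"
type_synonym 'z yflow = "nat \<Rightarrow> 'z \<Rightarrow> nat \<Rightarrow> real"
type_synonym 'l zflow = "nat \<Rightarrow> 'l \<Rightarrow> nat \<Rightarrow> real"

definition stations_of :: "('z,'l,'th,'m) eriver_scheme \<Rightarrow> 'z \<Rightarrow> 'l set" where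
  "stations_of E i = {l. i \<in> bdry E l}"

definition feasible :: "('z,'l,'th,'m) eriver_scheme \<Rightarrow> ('z,'l) loc \<Rightarrow> ('z,'l) loc set" where
  "feasible E k = (case k of
       Zone i \<Rightarrow> Zone ` nbr E i \<union> range Stn
     | Stn l \<Rightarrow> Zone ` bdry E l
     | Off \<Rightarrow> {Off})"

definition Omega :: "('z::finite,'l::finite,'th,'m) eriver_scheme \<Rightarrow> ('z,'l) policy set" where
  "Omega E = {\<pi>. \<forall>t k b. (\<forall>a. 0 \<le> \<pi> t k b a) \<and> (\<forall>a. a \<notin> feasible E k \<longrightarrow> \<pi> t k b a = 0)
                        \<and> (\<Sum>a\<in>feasible E k. \<pi> t k b a) = 1}"

definition meet :: "('z,'l,'th,'m) eriver_scheme \<Rightarrow> 'z yflow \<Rightarrow> nat \<Rightarrow> 'z \<Rightarrow> real" where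
  "meet E y t i = fmeet E (dem E t i) (\<Sum>b\<in>{1..Bmax E}. y t i b) (theta E t i)"

definition zhist :: "('z,'l,'th,'m) eriver_scheme \<Rightarrow> 'l zflow \<Rightarrow> nat \<Rightarrow> 'l \<Rightarrow> nat \<Rightarrow> nat \<Rightarrow> real" where
  "zhist E z t l = (\<lambda>t' b. if t' \<le> t \<and> b \<le> Bmax E then z t' l b else 0)"

definition waitp :: "('z,'l,'th,'m) eriver_scheme \<Rightarrow> 'l zflow \<Rightarrow> nat \<Rightarrow> 'l \<Rightarrow> nat \<Rightarrow> real" where
  "waitp E z t l \<omega> = gwait E t (zhist E z t l) \<omega>"

definition hist_dom :: "('z,'l,'th,'m) eriver_scheme \<Rightarrow> nat \<Rightarrow> (nat \<Rightarrow> nat \<Rightarrow> real) set" where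
  "hist_dom E t = {h. (\<forall>t' b. 0 \<le> h t' b) \<and> (\<forall>t' b. t < t' \<or> Bmax E < b \<longrightarrow> h t' b = 0)}"

definition chtime :: "('z,'l,'th,'m) eriver_scheme \<Rightarrow> nat \<Rightarrow> nat" where
  "chtime E b = nat \<lceil>real (Bmax E - b) / eff E\<rceil>"

definition xnew :: "('z::finite,'l::finite,'th,'m) eriver_scheme \<Rightarrow> 'z yflow \<Rightarrow> 'l zflow
                    \<Rightarrow> nat \<Rightarrow> ('z,'l) loc \<Rightarrow> nat \<Rightarrow> real" where
  "xnew E y z t k b =
    (if t = 0 then (case k of Off \<Rightarrow> 0 | _ \<Rightarrow> fleet E * rho E k b)
     else (case k of
       Zone k' \<Rightarrow> (1 - meet E y (t - 1) k') * y (t - 1) k' (b + 1)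
                + (\<Sum>t'\<in>{1..t}. \<Sum>i\<in>UNIV.
                     if t = t' + 1 + tz E i k'
                     then alpha E t' i k' * meet E y t' i * y t' i (b + tz E i k') else 0)
     | Stn l \<Rightarrow> (if b = Bmax E then
                  (\<Sum>b'\<in>{0..Bmax E}. \<Sum>\<omega>\<in>{0..t}.
                     if \<omega> + chtime E b' \<le> t
                     then waitp E z (t - \<omega> - chtime E b') l \<omega> * z (t - \<omega> - chtime E b') l b'
                     else 0)
                else 0)
     | Off \<Rightarrow> 0))"

definition ynew :: "('z::finite,'l::finite,'th,'m) eriver_scheme \<Rightarrow> ('z,'l) policy \<Rightarrow> ('z,'l) xflow
                    \<Rightarrow> nat \<Rightarrow> 'z \<Rightarrow> nat \<Rightarrow> real" where
  "ynew E \<pi> x t i b =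
     (\<Sum>k\<in>nbr E i. x t (Zone k) b * \<pi> t (Zone k) b (Zone i))
     + (if b = Bmax E then (\<Sum>l\<in>stations_of E i. x t (Stn l) b * \<pi> t (Stn l) b (Zone i)) else 0)"

definition znew :: "('z::finite,'l::finite,'th,'m) eriver_scheme \<Rightarrow> ('z,'l) policy \<Rightarrow> ('z,'l) xflow
                    \<Rightarrow> nat \<Rightarrow> 'l \<Rightarrow> nat \<Rightarrow> real" where
  "znew E \<pi> x t l b =
     (\<Sum>k\<in>UNIV. if tl E k l \<le> t
                then x (t - tl E k l) (Zone k) (b + tl E k l) * \<pi> (t - tl E k l) (Zone k) (b + tl E k l) (Stn l)
                else 0)"

text \<open>One step of the recursion: given flows correct at all times < t,
  compute z^t, then x^t, then y^t.\<close>
definition upd :: "('z::finite,'l::finite,'th,'m) eriver_scheme \<Rightarrow> ('z,'l) policy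
      \<Rightarrow> ('z,'l) xflow \<times> 'z yflow \<times> 'l zflow \<Rightarrow> nat \<Rightarrow> ('z,'l) xflow \<times> 'z yflow \<times> 'l zflow" where
  "upd E \<pi> s t = (case s of (x, y, z) \<Rightarrow>
     (let z' = z(t := znew E \<pi> x t);
          x' = x(t := xnew E y z' t);
          y' = y(t := ynew E \<pi> x' t)
      in (x', y', z')))"

fun flows_upto :: "('z::finite,'l::finite,'th,'m) eriver_scheme \<Rightarrow> ('z,'l) policy
      \<Rightarrow> nat \<Rightarrow> ('z,'l) xflow \<times> 'z yflow \<times> 'l zflow" where
  "flows_upto E \<pi> 0 = upd E \<pi> (\<lambda>_ _ _. 0, \<lambda>_ _ _. 0, \<lambda>_ _ _. 0) 0"
| "flows_upto E \<pi> (Suc n) = upd E \<pi> (flows_upto E \<pi> n) (Suc n)"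

definition mu :: "('z::finite,'l::finite,'th,'m) eriver_scheme \<Rightarrow> ('z,'l) policy \<Rightarrow> 'z yflow \<times> 'l zflow" where
  "mu E \<pi> = ((\<lambda>t. fst (snd (flows_upto E \<pi> t)) t), (\<lambda>t. snd (snd (flows_upto E \<pi> t)) t))"

text \<open>Expected reward-to-go of taking action a in state (t,k,b), given the
  continuation value Wn (a function of the next state).\<close>
definition Qval :: "('z::finite,'l::finite,'th,'m) eriver_scheme \<Rightarrow> (nat \<Rightarrow> ('z,'l) loc \<Rightarrow> nat \<Rightarrow> real)
      \<Rightarrow> 'z yflow \<Rightarrow> 'l zflow \<Rightarrow> nat \<Rightarrow> ('z,'l) loc \<Rightarrow> nat \<Rightarrow> ('z,'l) loc \<Rightarrow> real" where
  "Qval E Wn y z t k b a =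
    (case k of Off \<Rightarrow> 0
     | _ \<Rightarrow> (case a of
         Zone j \<Rightarrow>
           (if b = 0 then kappa E
            else (1 - meet E y t j) * Wn (t + 1) (Zone j) (b - 1)
               + (\<Sum>k'\<in>UNIV. meet E y t j * alpha E t j k' *
                    (if tz E j k' + 1 \<le> b
                     then fare E j k' + Wn (t + 1 + tz E j k') (Zone k') (b - 1 - tz E j k')
                     else kappa E)))
       | Stn l \<Rightarrow>
           (case k of
              Zone i \<Rightarrow>
                (if b < tl E i l then kappa E
                 else (\<Sum>\<omega>. waitp E z (t + tl E i l) l \<omega> *
                         (- cprice E l * real (chtime E (b - tl E i l))
                          + Wn (t + tl E i l + \<omega> + chtime E (b - tl E i l)) (Stn l) (Bmax E))))
            | _ \<Rightarrow> 0)
       | Off \<Rightarrow> 0))"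

text \<open>Value with d remaining decisions; states with t >= T are terminal.\<close>
primrec Wval :: "('z::finite,'l::finite,'th,'m) eriver_scheme \<Rightarrow> nat \<Rightarrow> ('z,'l) policy
      \<Rightarrow> 'z yflow \<Rightarrow> 'l zflow \<Rightarrow> nat \<Rightarrow> ('z,'l) loc \<Rightarrow> nat \<Rightarrow> real" where
  "Wval E 0 \<pi> y z t k b = 0"
| "Wval E (Suc d) \<pi> y z t k b =
     (if horizon E \<le> t then 0
      else (\<Sum>a\<in>feasible E k. \<pi> t k b a * Qval E (Wval E d \<pi> y z) y z t k b a))"

text \<open>V_rho(pi | y, z).  Every decision advances time by at least one step,
  so T decisions exhaust the horizon.\<close>
definition Vrho :: "('z::finite,'l::finite,'th,'m) eriver_scheme \<Rightarrow> ('z,'l) policy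
      \<Rightarrow> 'z yflow \<times> 'l zflow \<Rightarrow> real" where
  "Vrho E \<pi> yz = (case yz of (y, z) \<Rightarrow>
     (\<Sum>k\<in>UNIV. \<Sum>b\<in>{0..Bmax E}. rho E k b * Wval E (horizon E) \<pi> y z 0 k b))"

definition is_MFE :: "('z::finite,'l::finite,'th,'m) eriver_scheme \<Rightarrow> ('z,'l) policy \<Rightarrow> bool" where
  "is_MFE E \<pi>s \<longleftrightarrow> \<pi>s \<in> Omega E \<and> (\<forall>\<pi>\<in>Omega E. Vrho E \<pi> (mu E \<pi>s) \<le> Vrho E \<pi>s (mu E \<pi>s))"

end

theory Submission
  imports Defs
begin

lemma dist_fun_coord_bound:
  fixes u v :: "nat \<Rightarrow> real"
  shows "(1/2)^(to_nat i) * min \<bar>u i - v i\<bar> 1 \<le> dist u v"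
proof -
  let ?f = "\<lambda>n. (1/2)^n * min (dist (u (from_nat n)) (v (from_nat n))) 1 :: real"
  have sm: "summable ?f"
    by (rule summable_comparison_test'[of "\<lambda>n. (1/2)^n"]) (auto simp add: summable_geometric_iff)
  have "sum ?f {to_nat i} \<le> suminf ?f"
    by (rule sum_le_suminf[OF sm]) auto
  then show ?thesis unfolding dist_fun_def by (simp add: dist_real_def)
qed

lemma dist_fun_small:
  fixes u v :: "nat \<Rightarrow> real"
  assumes "\<And>j. \<bar>u j - v j\<bar> < d"
  shows "dist u v \<le> 2 * d + (1/2)^M"
proof -
  have fin: "finite {dist (u (from_nat n)) (v (from_nat n)) |n. n \<le> M}" by simp
  have ne: "{dist (u (from_nat n)) (v (from_nat n)) |n. n \<le> M} \<noteq> {}" by auto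
  have "Max {dist (u (from_nat n)) (v (from_nat n)) |n. n \<le> M} < d"
    using Max_in[OF fin ne] assms by (auto simp: dist_real_def)
  then show ?thesis using dist_fun_le_dist_first_terms[of u v M] by linarith
qed

lemma brouwer_nat:
  fixes F :: "(nat \<Rightarrow> real) \<Rightarrow> (nat \<Rightarrow> real)" and N :: nat
  assumes cont: "continuous_on {x. (\<forall>i<N. 0 \<le> x i \<and> x i \<le> 1) \<and> (\<forall>i\<ge>N. x i = 0)} F"
    and into: "\<And>x. x \<in> {x. (\<forall>i<N. 0 \<le> x i \<and> x i \<le> 1) \<and> (\<forall>i\<ge>N. x i = 0)} \<Longrightarrow>
                F x \<in> {x. (\<forall>i<N. 0 \<le> x i \<and> x i \<le> 1) \<and> (\<forall>i\<ge>N. x i = 0)}"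
  shows "\<exists>x\<in>{x. (\<forall>i<N. 0 \<le> x i \<and> x i \<le> 1) \<and> (\<forall>i\<ge>N. x i = 0)}. F x = x"
proof -
  define D where "D = {x::nat\<Rightarrow>real. (\<forall>i<N. 0 \<le> x i \<and> x i \<le> 1) \<and> (\<forall>i\<ge>N. x i = 0)}"
  have cont: "continuous_on D F" and into: "\<And>x. x \<in> D \<Longrightarrow> F x \<in> D"
    using cont into unfolding D_def by auto
  have Deq: "D = Pi\<^sub>E UNIV (\<lambda>i. if i < N then {0..1} else {0})"
  proof (rule set_eqI)
    fix x :: "nat \<Rightarrow> real"
    show "x \<in> D \<longleftrightarrow> x \<in> Pi\<^sub>E UNIV (\<lambda>i. if i < N then {0..1} else {0})"
      unfolding D_def PiE_UNIV_domain Pi_iff mem_Collect_eq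
    proof (intro iffI ballI allI impI)
      fix i assume "(\<forall>i<N. 0 \<le> x i \<and> x i \<le> 1) \<and> (\<forall>i\<ge>N. x i = 0)"
      then show "x i \<in> (if i < N then {0..1} else {0})" by (cases "i < N") auto
    next
      assume h: "\<forall>i\<in>UNIV. x i \<in> (if i < N then {0..1} else {0})"
      show "(\<forall>i<N. 0 \<le> x i \<and> x i \<le> 1) \<and> (\<forall>i\<ge>N. x i = 0)"
      proof safe
        fix i assume "i < N" then show "0 \<le> x i" "x i \<le> 1" using h[rule_format, of i] by auto
      next
        fix i assume "N \<le> i" then show "x i = 0" using h[rule_format, of i] by auto
      qed
    qed
  qed
  have "compactin (product_topology (\<lambda>_. euclidean) UNIV) D"
    unfolding Deq compactin_PiE by auto
  then have cD: "compact D"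
    by (simp add: euclidean_product_topology compactin_euclidean_iff)
  have zD: "(\<lambda>_. 0) \<in> D" unfolding D_def by auto
  have uc: "uniformly_continuous_on D F"
    by (rule compact_uniformly_continuous[OF cont cD])
  define K where "K = (\<Sum>i<N. to_nat i)"
  have K: "i < N \<Longrightarrow> to_nat i \<le> K" for i
    unfolding K_def by (rule member_le_sum) auto
  have UC: "\<exists>\<delta>>0. \<forall>x\<in>D. \<forall>y\<in>D. (\<forall>j. \<bar>x j - y j\<bar> < \<delta>) \<longrightarrow> (\<forall>i<N. \<bar>F x i - F y i\<bar> < \<epsilon>)"
    if "\<epsilon> > 0" for \<epsilon>
  proof -
    define \<eta> where "\<eta> = (1/2)^K * min \<epsilon> 1"
    have "\<eta> > 0" unfolding \<eta>_def using that by auto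
    then obtain d0 where d0: "d0 > 0" "\<And>x y. x\<in>D \<Longrightarrow> y\<in>D \<Longrightarrow> dist y x < d0 \<Longrightarrow> dist (F y) (F x) < \<eta>"
      using uc unfolding uniformly_continuous_on_def by metis
    obtain M :: nat where M: "(1/2::real)^M < d0/2"
      using real_arch_pow_inv[of "d0/2" "1/2"] d0 by auto
    show ?thesis
    proof (intro exI[of _ "d0/4"] conjI ballI impI allI)
      show "d0/4 > 0" using d0 by auto
      fix x y i assume x: "x \<in> D" and y: "y \<in> D" and c: "\<forall>j. \<bar>x j - y j\<bar> < d0/4" and i: "i < N"
      have "dist y x \<le> 2 * (d0/4) + (1/2)^M"
        by (rule dist_fun_small) (use c in \<open>auto simp: abs_minus_commute\<close>)
      then have "dist y x < d0" using M by linarith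
      then have dF: "dist (F y) (F x) < \<eta>" using d0 x y by auto
      have "(1/2)^(to_nat i) * min \<bar>F y i - F x i\<bar> 1 \<le> dist (F y) (F x)"
        by (rule dist_fun_coord_bound)
      then have 1: "(1/2)^(to_nat i) * min \<bar>F y i - F x i\<bar> 1 < (1/2)^K * min \<epsilon> 1"
        using dF unfolding \<eta>_def by linarith
      have 2: "(1/2::real)^K \<le> (1/2)^(to_nat i)"
        using K[OF i] by (simp add: power_decreasing)
      have "min \<bar>F y i - F x i\<bar> 1 < min \<epsilon> 1"
      proof (rule ccontr)
        assume "\<not> ?thesis"
        then have "min \<epsilon> 1 \<le> min \<bar>F y i - F x i\<bar> 1" by (meson not_less)
        then have "(1/2)^K * min \<epsilon> 1 \<le> (1/2)^(to_nat i) * min \<bar>F y i - F x i\<bar> 1"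
          using 2 that by (intro mult_mono) auto
        then show False using 1 by linarith
      qed
      then show "\<bar>F x i - F y i\<bar> < \<epsilon>" by (auto simp: abs_minus_commute)
    qed
  qed
  have approx: "\<exists>z\<in>D. \<forall>i<N. \<bar>F z i - z i\<bar> \<le> 2 * \<epsilon>" if eps: "\<epsilon> > 0" for \<epsilon>
  proof -
    obtain \<delta> where \<delta>: "\<delta> > 0" "\<And>x y i. x\<in>D \<Longrightarrow> y\<in>D \<Longrightarrow> (\<forall>j. \<bar>x j - y j\<bar> < \<delta>) \<Longrightarrow> i < N \<Longrightarrow> \<bar>F x i - F y i\<bar> < \<epsilon>"
      using UC[OF eps] by metis
    obtain p :: nat where p: "1 / min \<delta> \<epsilon> < real p"
      using reals_Archimedean2 by blast
    have mpos: "min \<delta> \<epsilon> > 0" using \<delta> eps by auto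
    then have pp: "p > 0" using p by (metis divide_pos_pos gr0I of_nat_0 order_less_asym zero_less_one)
    have m1: "1 < real p * min \<delta> \<epsilon>" using p pos_divide_less_eq[OF mpos, of 1 "real p"] by linarith
    have invp: "1 / real p < min \<delta> \<epsilon>"
      using pos_divide_less_eq[of "real p" 1 "min \<delta> \<epsilon>"] pp m1 by (metis mult.commute of_nat_0_less_iff)
    define g :: "(nat \<Rightarrow> nat) \<Rightarrow> nat \<Rightarrow> real" where
      "g q = (\<lambda>i. if i < N then real (q i) / real p else 0)" for q
    have gD: "(\<forall>i<N. q i \<le> p) \<Longrightarrow> g q \<in> D" for q
      unfolding g_def D_def using pp by (auto simp: field_simps)
    define lab :: "(nat \<Rightarrow> real) \<Rightarrow> nat \<Rightarrow> nat" where
      "lab x i = (if x i = 1 then 1 else if x i \<le> F x i then 0 else 1)" for x i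
    have lab0: "x \<in> D \<Longrightarrow> lab x i = 0 \<Longrightarrow> x i \<le> F x i" for x i
      unfolding lab_def by (auto split: if_splits)
    have lab1: "x \<in> D \<Longrightarrow> i < N \<Longrightarrow> lab x i = 1 \<Longrightarrow> F x i \<le> x i" for x i
      using into[of x] unfolding lab_def D_def by (auto split: if_splits)
    define label where "label q i = lab (g q) i" for q i
    have q1: "\<forall>x. (\<forall>i<N. x i \<le> p) \<longrightarrow> (\<forall>i<N. label x i = (0::nat) \<or> label x i = 1)"
      unfolding label_def lab_def by auto
    have q2: "\<forall>x. (\<forall>i<N. x i \<le> p) \<longrightarrow> (\<forall>i<N. x i = 0 \<longrightarrow> label x i = 0)"
    proof (intro allI impI)
      fix x i assume a: "\<forall>i<N. x i \<le> p" "i < N" "x i = 0"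
      have "F (g x) i \<ge> 0" using into[OF gD[OF a(1)]] a(2) unfolding D_def by auto
      then show "label x i = 0" using a unfolding label_def lab_def g_def by auto
    qed
    have q3: "\<forall>x. (\<forall>i<N. x i \<le> p) \<longrightarrow> (\<forall>i<N. x i = p \<longrightarrow> label x i = 1)"
      unfolding label_def lab_def g_def using pp by auto
    obtain q where q: "\<forall>i<N. q i < p"
      "\<forall>i<N. \<exists>r s. (\<forall>j<N. q j \<le> r j \<and> r j \<le> q j + 1) \<and> (\<forall>j<N. q j \<le> s j \<and> s j \<le> q j + 1) \<and> label r i \<noteq> label s i"
      by (rule kuhn_lemma[OF pp q1 q2 q3])
    have close: "\<forall>j. \<bar>g r j - g q j\<bar> < \<delta>" "\<forall>j. \<bar>g r j - g q j\<bar> \<le> 1 / real p"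
      if "\<forall>j<N. q j \<le> r j \<and> r j \<le> q j + 1" for r
    proof -
      have "\<bar>g r j - g q j\<bar> \<le> 1 / real p" for j
      proof (cases "j < N")
        case True
        then have "\<bar>real (r j) - real (q j)\<bar> \<le> 1" using that by auto
        then show ?thesis using True pp unfolding g_def by (simp add: field_simps flip: diff_divide_distrib)
      qed (simp add: g_def)
      then show "\<forall>j. \<bar>g r j - g q j\<bar> < \<delta>" "\<forall>j. \<bar>g r j - g q j\<bar> \<le> 1 / real p"
        using invp by (auto intro: le_less_trans)
    qed
    have qle: "\<forall>i<N. q i \<le> p" using q(1) by auto
    have rle: "\<forall>j<N. r j \<le> p" if "\<forall>j<N. q j \<le> r j \<and> r j \<le> q j + 1" for r
      using that q(1) by (metis Suc_le_eq add.commute le_trans plus_1_eq_Suc)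
    show ?thesis
    proof (intro bexI[of _ "g q"] allI impI)
      show "g q \<in> D" by (rule gD[OF qle])
      fix i assume i: "i < N"
      obtain r s where rs: "\<forall>j<N. q j \<le> r j \<and> r j \<le> q j + 1" "\<forall>j<N. q j \<le> s j \<and> s j \<le> q j + 1"
        "label r i \<noteq> label s i"
        using q(2) i by blast
      have rD: "g r \<in> D" and sD: "g s \<in> D" using gD rle rs by auto
      have Fr: "\<bar>F (g r) i - F (g q) i\<bar> < \<epsilon>" by (rule \<delta>(2)[OF rD gD[OF qle] close(1)[OF rs(1)] i])
      have Fs: "\<bar>F (g s) i - F (g q) i\<bar> < \<epsilon>" by (rule \<delta>(2)[OF sD gD[OF qle] close(1)[OF rs(2)] i])
      have cr: "\<bar>g r i - g q i\<bar> \<le> 1 / real p" using close(2)[OF rs(1)] by auto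
      have cs: "\<bar>g s i - g q i\<bar> \<le> 1 / real p" using close(2)[OF rs(2)] by auto
      have lr: "label r i = 0 \<or> label r i = 1" and ls: "label s i = 0 \<or> label s i = 1"
        using q1 rle rs i by auto
      have "(g r i \<le> F (g r) i \<and> F (g s) i \<le> g s i) \<or> (g s i \<le> F (g s) i \<and> F (g r) i \<le> g r i)"
        using lr ls rs(3) lab0[OF rD] lab1[OF rD i] lab0[OF sD] lab1[OF sD i] unfolding label_def by auto
      then show "\<bar>F (g q) i - g q i\<bar> \<le> 2 * \<epsilon>"
        using Fr Fs cr cs invp by (auto simp: abs_le_iff abs_less_iff)
    qed
  qed
  define \<phi> where "\<phi> x = (\<Sum>i<N. \<bar>F x i - x i\<bar>)" for x
  have c\<phi>: "continuous_on D \<phi>"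
    unfolding \<phi>_def
    by (intro continuous_intros continuous_on_product_then_coordinatewise[OF cont]
        continuous_on_subset[OF continuous_on_product_coordinates]) auto
  obtain x0 where x0: "x0 \<in> D" "\<And>y. y \<in> D \<Longrightarrow> \<phi> x0 \<le> \<phi> y"
    using continuous_attains_inf[OF cD _ c\<phi>] zD by blast
  have "\<phi> x0 \<le> 2 * real N * \<epsilon>" if eps: "\<epsilon> > 0" for \<epsilon>
  proof -
    obtain z where z: "z \<in> D" "\<forall>i<N. \<bar>F z i - z i\<bar> \<le> 2 * \<epsilon>" using approx[OF eps] by blast
    have "\<phi> z \<le> (\<Sum>i<N. 2 * \<epsilon>)" unfolding \<phi>_def by (rule sum_mono) (use z in auto)
    then show ?thesis using x0(2)[OF z(1)] by simp
  qed
  then have "\<phi> x0 \<le> 0"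
  proof -
    assume h: "\<And>\<epsilon>. \<epsilon> > 0 \<Longrightarrow> \<phi> x0 \<le> 2 * real N * \<epsilon>"
    show ?thesis
    proof (rule ccontr)
      assume "\<not> \<phi> x0 \<le> 0"
      then have pos: "\<phi> x0 > 0" by simp
      define \<epsilon> where "\<epsilon> = \<phi> x0 / (4 * (real N + 1))"
      have "\<epsilon> > 0" using pos unfolding \<epsilon>_def by auto
      from h[OF this] have "\<phi> x0 \<le> 2 * real N * \<epsilon>" .
      also have "\<dots> < \<phi> x0" unfolding \<epsilon>_def using pos by (simp add: field_simps add_pos_nonneg)
      finally show False by simp
    qed
  qed
  then have "\<phi> x0 = 0" unfolding \<phi>_def by (simp add: sum_nonneg antisym)
  then have "\<forall>i\<in>{..<N}. \<bar>F x0 i - x0 i\<bar> = 0"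
    unfolding \<phi>_def by (subst (asm) sum_nonneg_eq_0_iff) auto
  then have "F x0 i = x0 i" for i
    using into[OF x0(1)] x0(1) unfolding D_def by (cases "i < N") auto
  then show ?thesis using x0(1) unfolding D_def by auto
qed

locale erv =
  fixes E :: "('z::finite, 'l::finite, 'th) eriver"
  assumes eff_pos: "0 < eff E"
    and fleet_pos: "0 < fleet E"
    and tz_pos: "\<forall>i j. 0 < tz E i j"
    and tl_pos: "\<forall>i l. 0 < tl E i l"
    and nbr_refl: "\<forall>i. i \<in> nbr E i"
    and bdry_ne: "\<forall>l. bdry E l \<noteq> {}"
    and dem_nonneg: "\<forall>t i. 0 \<le> dem E t i"
    and alpha_nonneg: "\<forall>t i j. 0 \<le> alpha E t i j"
    and f_range: "\<forall>q y th. 0 \<le> q \<longrightarrow> 0 \<le> y \<longrightarrow> 0 \<le> fmeet E q y th \<and> fmeet E q y th \<le> 1"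
    and g_range: "\<forall>t h \<omega>. h \<in> hist_dom E t \<longrightarrow> 0 \<le> gwait E t h \<omega> \<and> gwait E t h \<omega> \<le> 1"
    and g_pmf: "\<forall>t h. h \<in> hist_dom E t \<longrightarrow> (\<lambda>\<omega>. gwait E t h \<omega>) sums 1"
    and rho_nonneg: "\<forall>k b. 0 \<le> rho E k b"
    and f_cont: "\<forall>q th. 0 \<le> q \<longrightarrow> continuous_on {0..} (\<lambda>y. fmeet E q y th)"
    and g_cont: "\<forall>t \<omega>. continuous_on (hist_dom E t) (\<lambda>h. gwait E t h \<omega>)"
begin

lemma meet_range:
  assumes "\<And>b. 0 \<le> y t i b"
  shows "0 \<le> meet E y t i" "meet E y t i \<le> 1"
proof -
  have "0 \<le> (\<Sum>b\<in>{1..Bmax E}. y t i b)" using assms by (simp add: sum_nonneg)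
  then show "0 \<le> meet E y t i" "meet E y t i \<le> 1"
    using f_range dem_nonneg unfolding meet_def by auto
qed

lemma zhist_dom:
  assumes "\<And>t' b. 0 \<le> z t' l b"
  shows "zhist E z t l \<in> hist_dom E t"
  using assms unfolding zhist_def hist_dom_def by auto

lemma waitp_range:
  assumes "\<And>t' b. 0 \<le> z t' l b"
  shows "0 \<le> waitp E z t l \<omega>" "waitp E z t l \<omega> \<le> 1"
  using g_range zhist_dom[of z l t, OF assms] unfolding waitp_def by auto

lemma waitp_sums:
  assumes "\<And>t' b. 0 \<le> z t' l b"
  shows "(\<lambda>\<omega>. waitp E z t l \<omega>) sums 1"
  using g_pmf zhist_dom[of z l t, OF assms] unfolding waitp_def by auto

definition nonneg3 :: "(nat \<Rightarrow> 'a \<Rightarrow> nat \<Rightarrow> real) \<Rightarrow> bool" where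
  "nonneg3 f \<longleftrightarrow> (\<forall>t k b. 0 \<le> f t k b)"

definition polnn :: "('z,'l) policy \<Rightarrow> bool" where
  "polnn \<pi> \<longleftrightarrow> (\<forall>t k b a. 0 \<le> \<pi> t k b a)"

lemma znew_nonneg: "polnn \<pi> \<Longrightarrow> nonneg3 x \<Longrightarrow> 0 \<le> znew E \<pi> x t l b"
  unfolding znew_def polnn_def nonneg3_def by (auto intro!: sum_nonneg)

lemma xnew_nonneg:
  assumes "nonneg3 y" "nonneg3 z"
  shows "0 \<le> xnew E y z t k b"
proof -
  have m: "0 \<le> meet E y t' i" "meet E y t' i \<le> 1" for t' i
    using meet_range assms(1) unfolding nonneg3_def by auto
  have w: "0 \<le> waitp E z t' l \<omega>" for t' l \<omega>
    using waitp_range assms(2) unfolding nonneg3_def by auto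
  have y: "0 \<le> y t' i b'" and z: "0 \<le> z t' l b'" for t' i b' l
    using assms unfolding nonneg3_def by auto
  show ?thesis
  proof (cases "t = 0")
    case True
    then show ?thesis unfolding xnew_def using fleet_pos rho_nonneg
      by (cases k) (auto intro!: mult_nonneg_nonneg)
  next
    case False
    show ?thesis
    proof (cases k)
      case (Zone k')
      have "0 \<le> (1 - meet E y (t - 1) k') * y (t - 1) k' (b + 1)"
        using m y by (intro mult_nonneg_nonneg) auto
      moreover have "0 \<le> (\<Sum>t'\<in>{1..t}. \<Sum>i\<in>UNIV.
                     if t = t' + 1 + tz E i k'
                     then alpha E t' i k' * meet E y t' i * y t' i (b + tz E i k') else 0)"
        using m y alpha_nonneg by (intro sum_nonneg) (auto intro!: mult_nonneg_nonneg)
      ultimately show ?thesis using False Zone unfolding xnew_def by simp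
    next
      case (Stn l)
      have "0 \<le> (\<Sum>b'\<in>{0..Bmax E}. \<Sum>\<omega>\<in>{0..t}.
                     if \<omega> + chtime E b' \<le> t
                     then waitp E z (t - \<omega> - chtime E b') l \<omega> * z (t - \<omega> - chtime E b') l b'
                     else 0)"
        using w z by (intro sum_nonneg) (auto intro!: mult_nonneg_nonneg)
      then show ?thesis using False Stn unfolding xnew_def by simp
    next
      case Off
      then show ?thesis using False unfolding xnew_def by simp
    qed
  qed
qed

lemma ynew_nonneg: "polnn \<pi> \<Longrightarrow> nonneg3 x \<Longrightarrow> 0 \<le> ynew E \<pi> x t i b"
  unfolding ynew_def polnn_def nonneg3_def by (auto intro!: sum_nonneg add_nonneg_nonneg)

lemma upd_nonneg:
  assumes "polnn \<pi>" "nonneg3 x" "nonneg3 y" "nonneg3 z" "upd E \<pi> (x,y,z) t = (x',y',z')"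
  shows "nonneg3 x'" "nonneg3 y'" "nonneg3 z'"
proof -
  have z': "z' = z(t := znew E \<pi> x t)" and x': "x' = x(t := xnew E y z' t)"
    and y': "y' = y(t := ynew E \<pi> x' t)"
    using assms(5) unfolding upd_def Let_def by auto
  show nz: "nonneg3 z'" using assms znew_nonneg unfolding z' nonneg3_def by auto
  show nx: "nonneg3 x'" using assms xnew_nonneg[OF _ nz] unfolding x' nonneg3_def by auto
  show "nonneg3 y'" using assms ynew_nonneg[OF _ nx] unfolding y' nonneg3_def by auto
qed

lemma flows_nonneg:
  assumes "polnn \<pi>"
  shows "nonneg3 (fst (flows_upto E \<pi> n)) \<and> nonneg3 (fst (snd (flows_upto E \<pi> n))) \<and> nonneg3 (snd (snd (flows_upto E \<pi> n)))"
proof (induction n)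
  case 0
  have z: "nonneg3 (\<lambda>_ _ _. 0::real)" by (simp add: nonneg3_def)
  obtain x y z where e: "flows_upto E \<pi> 0 = (x,y,z)" by (metis prod_cases3)
  have "nonneg3 x \<and> nonneg3 y \<and> nonneg3 z"
    using upd_nonneg[OF assms(1) z z z, of 0 x y z] e by (simp only: flows_upto.simps)
  then show ?case using e by simp
next
  case (Suc n)
  obtain x0 y0 z0 where e0: "flows_upto E \<pi> n = (x0,y0,z0)" by (metis prod_cases3)
  obtain x y z where e: "flows_upto E \<pi> (Suc n) = (x,y,z)" by (metis prod_cases3)
  have h: "nonneg3 x0" "nonneg3 y0" "nonneg3 z0" using Suc e0 by auto
  have "nonneg3 x \<and> nonneg3 y \<and> nonneg3 z"
    using upd_nonneg[OF assms(1) h, of "Suc n" x y z] e e0 by (simp only: flows_upto.simps)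
  then show ?case using e by simp
qed

lemma mu_nonneg:
  assumes "polnn \<pi>" "mu E \<pi> = (y,z)"
  shows "nonneg3 y" "nonneg3 z"
proof -
  have "0 \<le> fst (snd (flows_upto E \<pi> t)) t i b \<and> 0 \<le> snd (snd (flows_upto E \<pi> t)) t i' b" for t i i' b
    using flows_nonneg[OF assms(1), of t] unfolding nonneg3_def by blast
  then show "nonneg3 y" "nonneg3 z" using assms(2) unfolding mu_def nonneg3_def by auto
qed


lemma cont_if [continuous_intros]:
  "(c \<Longrightarrow> continuous_on S f) \<Longrightarrow> (\<not> c \<Longrightarrow> continuous_on S g) \<Longrightarrow> continuous_on S (\<lambda>p. if c then f p else g p)"
  by (cases c) auto

definition cont3 :: "'p::topological_space set \<Rightarrow> ('p \<Rightarrow> nat \<Rightarrow> 'a \<Rightarrow> nat \<Rightarrow> real) \<Rightarrow> bool" where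
  "cont3 S f \<longleftrightarrow> (\<forall>t k b. continuous_on S (\<lambda>p. f p t k b))"

definition polcont :: "'p::topological_space set \<Rightarrow> ('p \<Rightarrow> ('z,'l) policy) \<Rightarrow> bool" where
  "polcont S P \<longleftrightarrow> (\<forall>t k b a. continuous_on S (\<lambda>p. P p t k b a))"

lemma meet_cont:
  assumes "cont3 S Y" "\<forall>p\<in>S. nonneg3 (Y p)"
  shows "continuous_on S (\<lambda>p. meet E (Y p) t i)"
proof -
  have c1: "continuous_on {0..} (\<lambda>y. fmeet E (dem E t i) y (theta E t i))"
    using f_cont dem_nonneg by auto
  have c2: "continuous_on S (\<lambda>p. \<Sum>b\<in>{1..Bmax E}. Y p t i b)"
    using assms(1) unfolding cont3_def by (intro continuous_intros) auto
  have c3: "(\<lambda>p. \<Sum>b\<in>{1..Bmax E}. Y p t i b) ` S \<subseteq> {0..}"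
    using assms(2) unfolding nonneg3_def by (auto intro!: sum_nonneg)
  show ?thesis unfolding meet_def by (rule continuous_on_compose2[OF c1 c2 c3])
qed

lemma zhist_cont:
  assumes "cont3 S Z"
  shows "continuous_on S (\<lambda>p. zhist E (Z p) t l)"
proof (intro continuous_on_coordinatewise_then_product)
  fix t' b
  show "continuous_on S (\<lambda>p. zhist E (Z p) t l t' b)"
    unfolding zhist_def using assms unfolding cont3_def by (intro continuous_intros) auto
qed

lemma waitp_cont:
  assumes "cont3 S Z" "\<forall>p\<in>S. nonneg3 (Z p)"
  shows "continuous_on S (\<lambda>p. waitp E (Z p) t l \<omega>)"
proof -
  have c1: "continuous_on (hist_dom E t) (\<lambda>h. gwait E t h \<omega>)" using g_cont by auto
  have c3: "(\<lambda>p. zhist E (Z p) t l) ` S \<subseteq> hist_dom E t"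
    using assms(2) zhist_dom unfolding nonneg3_def by blast
  show ?thesis unfolding waitp_def by (rule continuous_on_compose2[OF c1 zhist_cont[OF assms(1)] c3])
qed

lemma znew_cont:
  assumes "polcont S P" "cont3 S X"
  shows "continuous_on S (\<lambda>p. znew E (P p) (X p) t l b)"
  unfolding znew_def using assms unfolding polcont_def cont3_def
  by (intro continuous_intros) auto

lemma ynew_cont:
  assumes "polcont S P" "cont3 S X"
  shows "continuous_on S (\<lambda>p. ynew E (P p) (X p) t i b)"
  unfolding ynew_def using assms unfolding polcont_def cont3_def
  by (intro continuous_intros) auto

lemma xnew_cont:
  assumes "cont3 S Y" "\<forall>p\<in>S. nonneg3 (Y p)" "cont3 S Z" "\<forall>p\<in>S. nonneg3 (Z p)"
  shows "continuous_on S (\<lambda>p. xnew E (Y p) (Z p) t k b)"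
proof -
  note m = meet_cont[OF assms(1,2)] and w = waitp_cont[OF assms(3,4)]
  have y: "continuous_on S (\<lambda>p. Y p t' i b')" and z: "continuous_on S (\<lambda>p. Z p t' l b')" for t' i b' l
    using assms unfolding cont3_def by auto
  show ?thesis
  proof (cases k)
    case (Zone k')
    then show ?thesis unfolding xnew_def by (simp only: loc.case) (intro continuous_intros m w y z)
  next
    case (Stn l)
    then show ?thesis unfolding xnew_def by (simp only: loc.case) (intro continuous_intros m w y z)
  next
    case Off
    then show ?thesis unfolding xnew_def by (simp only: loc.case) (intro continuous_intros)
  qed
qed


lemma cont3_upd:
  assumes "cont3 S F" "\<And>k b. continuous_on S (\<lambda>p. G p k b)"
  shows "cont3 S (\<lambda>p. (F p)(t := G p))"
  unfolding cont3_def
proof (intro allI)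
  fix t0 k b
  show "continuous_on S (\<lambda>p. ((F p)(t := G p)) t0 k b)"
    using assms unfolding cont3_def by (cases "t0 = t") auto
qed

lemma upd_eq: "upd E \<pi> (x,y,z) t =
   (x(t := xnew E y (z(t := znew E \<pi> x t)) t),
    y(t := ynew E \<pi> (x(t := xnew E y (z(t := znew E \<pi> x t)) t)) t),
    z(t := znew E \<pi> x t))"
  unfolding upd_def Let_def by simp

lemma upd_cont:
  assumes P: "polcont S P" "\<forall>p\<in>S. polnn (P p)"
    and c: "cont3 S X" "cont3 S Y" "cont3 S Z"
    and n: "\<forall>p\<in>S. nonneg3 (X p)" "\<forall>p\<in>S. nonneg3 (Y p)" "\<forall>p\<in>S. nonneg3 (Z p)"
  shows "cont3 S (\<lambda>p. fst (upd E (P p) (X p, Y p, Z p) t)) \<and>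
         cont3 S (\<lambda>p. fst (snd (upd E (P p) (X p, Y p, Z p) t))) \<and>
         cont3 S (\<lambda>p. snd (snd (upd E (P p) (X p, Y p, Z p) t)))"
proof -
  define Z' where "Z' p = (Z p)(t := znew E (P p) (X p) t)" for p
  define X' where "X' p = (X p)(t := xnew E (Y p) (Z' p) t)" for p
  define Y' where "Y' p = (Y p)(t := ynew E (P p) (X' p) t)" for p
  have U: "upd E (P p) (X p, Y p, Z p) t = (X' p, Y' p, Z' p)" for p
    unfolding upd_eq X'_def Y'_def Z'_def by simp
  have cZ': "cont3 S Z'"
    unfolding Z'_def by (rule cont3_upd[OF c(3) znew_cont[OF P(1) c(1)]])
  have nZ': "\<forall>p\<in>S. nonneg3 (Z' p)"
    unfolding Z'_def using n(3) znew_nonneg P(2) n(1) unfolding nonneg3_def by auto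
  have cX': "cont3 S X'"
    unfolding X'_def by (rule cont3_upd[OF c(1) xnew_cont[OF c(2) n(2) cZ' nZ']])
  have nX': "\<forall>p\<in>S. nonneg3 (X' p)"
    unfolding X'_def using n(1) xnew_nonneg n(2) nZ' unfolding nonneg3_def by auto
  have cY': "cont3 S Y'"
    unfolding Y'_def by (rule cont3_upd[OF c(2) ynew_cont[OF P(1) cX']])
  show ?thesis unfolding U using cX' cY' cZ' by simp
qed

lemma flows_cont:
  assumes P: "polcont S P" "\<forall>p\<in>S. polnn (P p)"
  shows "cont3 S (\<lambda>p. fst (flows_upto E (P p) n)) \<and>
         cont3 S (\<lambda>p. fst (snd (flows_upto E (P p) n))) \<and>
         cont3 S (\<lambda>p. snd (snd (flows_upto E (P p) n)))"
proof (induction n)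
  case 0
  have z: "cont3 S (\<lambda>p. (\<lambda>_ _ _. 0::real))" "\<forall>p\<in>S. nonneg3 (\<lambda>_ _ _. 0::real)"
    by (auto simp: cont3_def nonneg3_def)
  show ?case using upd_cont[OF P z(1) z(1) z(1) z(2) z(2) z(2), of 0] by (simp only: flows_upto.simps)
next
  case (Suc n)
  define X where "X p = fst (flows_upto E (P p) n)" for p
  define Y where "Y p = fst (snd (flows_upto E (P p) n))" for p
  define Z where "Z p = snd (snd (flows_upto E (P p) n))" for p
  have e: "flows_upto E (P p) n = (X p, Y p, Z p)" for p unfolding X_def Y_def Z_def by simp
  have c: "cont3 S X" "cont3 S Y" "cont3 S Z" using Suc unfolding X_def Y_def Z_def by auto
  have nn: "\<forall>p\<in>S. nonneg3 (X p)" "\<forall>p\<in>S. nonneg3 (Y p)" "\<forall>p\<in>S. nonneg3 (Z p)"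
    using flows_nonneg P(2) unfolding X_def Y_def Z_def by auto
  show ?case using upd_cont[OF P c nn, of "Suc n"] by (simp only: flows_upto.simps e)
qed

lemma mu_cont:
  assumes P: "polcont S P" "\<forall>p\<in>S. polnn (P p)"
  shows "cont3 S (\<lambda>p. fst (mu E (P p)))" "cont3 S (\<lambda>p. snd (mu E (P p)))"
  using flows_cont[OF P] unfolding mu_def cont3_def by auto


definition vanish :: "(nat \<Rightarrow> ('z,'l) loc \<Rightarrow> nat \<Rightarrow> real) \<Rightarrow> bool" where
  "vanish W \<longleftrightarrow> (\<forall>t k b. horizon E \<le> t \<longrightarrow> W t k b = 0)"

lemma Qstn_finite:
  assumes "vanish Wn" "nonneg3 z"
  shows "(\<Sum>\<omega>. waitp E z T l \<omega> * (C + Wn (T + \<omega> + c) (Stn l) (Bmax E)))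
         = C + (\<Sum>\<omega><horizon E. waitp E z T l \<omega> * Wn (T + \<omega> + c) (Stn l) (Bmax E))"
proof -
  have zz: "\<And>t' b. 0 \<le> z t' l b" using assms(2) unfolding nonneg3_def by auto
  have s1: "(\<lambda>\<omega>. waitp E z T l \<omega> * C) sums C"
    using sums_mult2[OF waitp_sums[of z l T, OF zz], of C] by simp
  have s2: "(\<lambda>\<omega>. waitp E z T l \<omega> * Wn (T + \<omega> + c) (Stn l) (Bmax E)) sums
             (\<Sum>\<omega><horizon E. waitp E z T l \<omega> * Wn (T + \<omega> + c) (Stn l) (Bmax E))"
    by (rule sums_finite) (use assms(1) in \<open>auto simp: vanish_def\<close>)
  have "(\<lambda>\<omega>. waitp E z T l \<omega> * (C + Wn (T + \<omega> + c) (Stn l) (Bmax E))) sums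
          (C + (\<Sum>\<omega><horizon E. waitp E z T l \<omega> * Wn (T + \<omega> + c) (Stn l) (Bmax E)))"
    using sums_add[OF s1 s2] by (simp add: distrib_left)
  then show ?thesis by (rule sums_unique[symmetric])
qed

lemma Qval_cong:
  assumes "\<And>t' k b. t < t' \<Longrightarrow> Wn t' k b = Wn' t' k b"
  shows "Qval E Wn y z t k b a = Qval E Wn' y z t k b a"
proof -
  have tz: "\<And>j k' k2 b2. Wn (t + 1 + tz E j k') k2 b2 = Wn' (t + 1 + tz E j k') k2 b2"
    using assms by simp
  have tz2: "\<And>x k2 b2. Wn (Suc (t + x)) k2 b2 = Wn' (Suc (t + x)) k2 b2"
    using assms by simp
  have tl: "\<And>i l \<omega> c. t < t + tl E i l + \<omega> + c" using tl_pos by (simp add: add.assoc)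
  show ?thesis
    unfolding Qval_def
    by (cases k; cases a) (simp_all add: tl assms tz tz2 cong: if_cong)
qed


lemma Qval_mono:
  assumes b: "b \<le> Bmax E" and v: "vanish Wn" "vanish Wn'"
    and le: "\<And>t' k b'. t < t' \<Longrightarrow> b' \<le> Bmax E \<Longrightarrow> Wn t' k b' \<le> Wn' t' k b'"
    and y: "nonneg3 y" and z: "nonneg3 z"
  shows "Qval E Wn y z t k b a \<le> Qval E Wn' y z t k b a"
proof -
  have m: "0 \<le> meet E y t j" "meet E y t j \<le> 1" for j
    using meet_range y unfolding nonneg3_def by auto
  have zone: "(1 - meet E y t j) * Wn (t + 1) (Zone j) (b - 1)
               + (\<Sum>k'\<in>UNIV. meet E y t j * alpha E t j k' *
                    (if tz E j k' + 1 \<le> b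
                     then fare E j k' + Wn (t + 1 + tz E j k') (Zone k') (b - 1 - tz E j k')
                     else kappa E))
             \<le> (1 - meet E y t j) * Wn' (t + 1) (Zone j) (b - 1)
               + (\<Sum>k'\<in>UNIV. meet E y t j * alpha E t j k' *
                    (if tz E j k' + 1 \<le> b
                     then fare E j k' + Wn' (t + 1 + tz E j k') (Zone k') (b - 1 - tz E j k')
                     else kappa E))" for j
  proof (intro add_mono mult_left_mono sum_mono)
    show "Wn (t + 1) (Zone j) (b - 1) \<le> Wn' (t + 1) (Zone j) (b - 1)" using le b by simp
    show "0 \<le> 1 - meet E y t j" using m by simp
    fix k' show "(if tz E j k' + 1 \<le> b
                     then fare E j k' + Wn (t + 1 + tz E j k') (Zone k') (b - 1 - tz E j k')
                     else kappa E) \<le> (if tz E j k' + 1 \<le> b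
                     then fare E j k' + Wn' (t + 1 + tz E j k') (Zone k') (b - 1 - tz E j k')
                     else kappa E)"
      using le[of "t + 1 + tz E j k'" "b - 1 - tz E j k'" "Zone k'"] b by auto
    show "0 \<le> meet E y t j * alpha E t j k'" using m alpha_nonneg by simp
  qed
  have stn: "(\<Sum>\<omega>. waitp E z (t + tl E i l) l \<omega> *
                         (- cprice E l * real (chtime E (b - tl E i l))
                          + Wn (t + tl E i l + \<omega> + chtime E (b - tl E i l)) (Stn l) (Bmax E)))
           \<le> (\<Sum>\<omega>. waitp E z (t + tl E i l) l \<omega> *
                         (- cprice E l * real (chtime E (b - tl E i l))
                          + Wn' (t + tl E i l + \<omega> + chtime E (b - tl E i l)) (Stn l) (Bmax E)))" for i l
  proof -
    have w: "0 \<le> waitp E z T l \<omega>" for T \<omega> using waitp_range z unfolding nonneg3_def by auto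
    have tt: "t < t + tl E i l + \<omega> + c" for \<omega> c using tl_pos by (simp add: add.assoc)
    show ?thesis
      unfolding Qstn_finite[OF v(1) z] Qstn_finite[OF v(2) z]
      by (intro add_left_mono sum_mono mult_left_mono w le tt) simp
  qed
  show ?thesis
  proof (cases k)
    case (Zone i)
    show ?thesis
    proof (cases a)
      case (Zone j)
      show ?thesis
      proof (cases "b = 0")
        case True then show ?thesis unfolding Qval_def using \<open>k = Zone i\<close> \<open>a = Zone j\<close> by simp
      next
        case False then show ?thesis unfolding Qval_def using \<open>k = Zone i\<close> \<open>a = Zone j\<close> zone[of j]
          by (simp only: loc.case if_False)
      qed
    next
      case (Stn l)
      show ?thesis
      proof (cases "b < tl E i l")
        case True then show ?thesis unfolding Qval_def using \<open>k = Zone i\<close> \<open>a = Stn l\<close> by simp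
      next
        case False then show ?thesis unfolding Qval_def using \<open>k = Zone i\<close> \<open>a = Stn l\<close> stn[of i l]
          by (simp only: loc.case if_False)
      qed
    next
      case Off then show ?thesis unfolding Qval_def using \<open>k = Zone i\<close> by simp
    qed
  next
    case (Stn l')
    show ?thesis
    proof (cases a)
      case (Zone j)
      show ?thesis
      proof (cases "b = 0")
        case True then show ?thesis unfolding Qval_def using \<open>k = Stn l'\<close> \<open>a = Zone j\<close> by simp
      next
        case False then show ?thesis unfolding Qval_def using \<open>k = Stn l'\<close> \<open>a = Zone j\<close> zone[of j]
          by (simp only: loc.case if_False)
      qed
    next
      case (Stn l)
      then show ?thesis unfolding Qval_def using \<open>k = Stn l'\<close> by simp
    next
      case Off then show ?thesis unfolding Qval_def using \<open>k = Stn l'\<close> by simp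
    qed
  next
    case Off then show ?thesis unfolding Qval_def by simp
  qed
qed

lemma Qval_cont:
  assumes W: "\<And>t k b. continuous_on S (\<lambda>p. Wn p t k b)" "\<forall>p\<in>S. vanish (Wn p)"
    and Y: "cont3 S Y" "\<forall>p\<in>S. nonneg3 (Y p)"
    and Z: "cont3 S Z" "\<forall>p\<in>S. nonneg3 (Z p)"
  shows "continuous_on S (\<lambda>p. Qval E (Wn p) (Y p) (Z p) t k b a)"
proof -
  note m = meet_cont[OF Y] and w = waitp_cont[OF Z]
  have stn: "continuous_on S (\<lambda>p. (\<Sum>\<omega>. waitp E (Z p) (t + tl E i l) l \<omega> *
                         (- cprice E l * real (chtime E (b - tl E i l))
                          + Wn p (t + tl E i l + \<omega> + chtime E (b - tl E i l)) (Stn l) (Bmax E))))" for i l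
  proof -
    have cg: "continuous_on S (\<lambda>p. - cprice E l * real (chtime E (b - tl E i l)) +
       (\<Sum>\<omega><horizon E. waitp E (Z p) (t + tl E i l) l \<omega> * Wn p (t + tl E i l + \<omega> + chtime E (b - tl E i l)) (Stn l) (Bmax E)))"
      by (intro continuous_intros w W)
    have eq: "(\<Sum>\<omega>. waitp E (Z p) (t + tl E i l) l \<omega> *
                         (- cprice E l * real (chtime E (b - tl E i l))
                          + Wn p (t + tl E i l + \<omega> + chtime E (b - tl E i l)) (Stn l) (Bmax E)))
       = - cprice E l * real (chtime E (b - tl E i l)) +
       (\<Sum>\<omega><horizon E. waitp E (Z p) (t + tl E i l) l \<omega> * Wn p (t + tl E i l + \<omega> + chtime E (b - tl E i l)) (Stn l) (Bmax E))"
      if "p \<in> S" for p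
      by (rule Qstn_finite) (use W(2) Z(2) that in auto)
    show ?thesis by (rule continuous_on_eq[OF cg]) (rule eq[symmetric])
  qed
  show ?thesis
  proof (cases k)
    case (Zone i)
    then show ?thesis unfolding Qval_def
      by (cases a) (simp_all only: loc.case; intro continuous_intros m W stn)+
  next
    case (Stn l)
    then show ?thesis unfolding Qval_def
      by (cases a) (simp_all only: loc.case; intro continuous_intros m W)+
  next
    case Off
    then show ?thesis unfolding Qval_def by simp
  qed
qed


lemma Wval_vanish: "vanish (Wval E d \<pi> y z)"
  unfolding vanish_def by (cases d) auto

lemma Wval_stab:
  assumes "horizon E - t \<le> d" "horizon E - t \<le> d'"
  shows "Wval E d \<pi> y z t k b = Wval E d' \<pi> y z t k b"
  using assms
proof (induction d arbitrary: d' t k b)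
  case 0
  then have "horizon E \<le> t" by simp
  then show ?case using Wval_vanish unfolding vanish_def by metis
next
  case (Suc d)
  show ?case
  proof (cases "horizon E \<le> t")
    case True
    then show ?thesis using Wval_vanish unfolding vanish_def by metis
  next
    case False
    then obtain m where d': "d' = Suc m" using Suc.prems by (cases d') auto
    have "Qval E (Wval E d \<pi> y z) y z t k b a = Qval E (Wval E m \<pi> y z) y z t k b a" for a
      by (rule Qval_cong) (rule Suc.IH, use Suc.prems d' in auto)
    then show ?thesis using False d' by simp
  qed
qed

lemma Wval_cont:
  assumes P: "polcont S P" "\<forall>p\<in>S. polnn (P p)"
    and Y: "cont3 S Y" "\<forall>p\<in>S. nonneg3 (Y p)"
    and Z: "cont3 S Z" "\<forall>p\<in>S. nonneg3 (Z p)"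
  shows "continuous_on S (\<lambda>p. Wval E d (P p) (Y p) (Z p) t k b)"
proof (induction d arbitrary: t k b)
  case 0
  then show ?case by simp
next
  case (Suc d)
  have q: "continuous_on S (\<lambda>p. Qval E (Wval E d (P p) (Y p) (Z p)) (Y p) (Z p) t k b a)" for a
    by (rule Qval_cont[OF Suc.IH _ Y Z]) (simp add: Wval_vanish)
  have pc: "continuous_on S (\<lambda>p. P p t k b a)" for a using P(1) unfolding polcont_def by auto
  show ?case
    by (simp only: Wval.simps) (intro continuous_intros q pc)
qed


definition Qs :: "('z,'l) policy \<Rightarrow> nat \<Rightarrow> ('z,'l) loc \<Rightarrow> nat \<Rightarrow> ('z,'l) loc \<Rightarrow> real" where
  "Qs \<pi> t k b a = Qval E (Wval E (horizon E) \<pi> (fst (mu E \<pi>)) (snd (mu E \<pi>))) (fst (mu E \<pi>)) (snd (mu E \<pi>)) t k b a"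

definition Vs :: "('z,'l) policy \<Rightarrow> nat \<Rightarrow> ('z,'l) loc \<Rightarrow> nat \<Rightarrow> real" where
  "Vs \<pi> t k b = (\<Sum>a\<in>feasible E k. \<pi> t k b a * Qs \<pi> t k b a)"

definition gain :: "('z,'l) policy \<Rightarrow> nat \<Rightarrow> ('z,'l) loc \<Rightarrow> nat \<Rightarrow> ('z,'l) loc \<Rightarrow> real" where
  "gain \<pi> t k b a = max 0 (Qs \<pi> t k b a - Vs \<pi> t k b)"

definition nash :: "('z,'l) policy \<Rightarrow> nat \<Rightarrow> ('z,'l) loc \<Rightarrow> nat \<Rightarrow> ('z,'l) loc \<Rightarrow> real" where
  "nash \<pi> t k b a = (\<pi> t k b a + gain \<pi> t k b a) / (1 + (\<Sum>a'\<in>feasible E k. gain \<pi> t k b a'))"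

lemma gain_nonneg: "0 \<le> gain \<pi> t k b a" unfolding gain_def by simp

lemma Qs_cont:
  assumes P: "polcont S P" "\<forall>p\<in>S. polnn (P p)"
  shows "continuous_on S (\<lambda>p. Qs (P p) t k b a)"
proof -
  have Y: "cont3 S (\<lambda>p. fst (mu E (P p)))" "\<forall>p\<in>S. nonneg3 (fst (mu E (P p)))"
    using mu_cont[OF P] mu_nonneg P(2) by (auto, metis prod.collapse)
  have Z: "cont3 S (\<lambda>p. snd (mu E (P p)))" "\<forall>p\<in>S. nonneg3 (snd (mu E (P p)))"
    using mu_cont[OF P] mu_nonneg P(2) by (auto, metis prod.collapse)
  show ?thesis unfolding Qs_def
    by (rule Qval_cont[OF Wval_cont[OF P Y Z] _ Y Z]) (simp add: Wval_vanish)
qed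

lemma nash_cont:
  assumes P: "polcont S P" "\<forall>p\<in>S. polnn (P p)"
  shows "continuous_on S (\<lambda>p. nash (P p) t k b a)"
proof -
  have pc: "continuous_on S (\<lambda>p. P p t k b a)" for a using P(1) unfolding polcont_def by auto
  have gc: "continuous_on S (\<lambda>p. gain (P p) t k b a)" for a
    unfolding gain_def Vs_def by (intro continuous_intros pc Qs_cont[OF P])
  have pos: "\<forall>p\<in>S. 1 + sum (gain (P p) t k b) (feasible E k) \<noteq> 0"
  proof
    fix p
    have "0 \<le> sum (gain (P p) t k b) (feasible E k)" by (rule sum_nonneg) (rule gain_nonneg)
    then show "1 + sum (gain (P p) t k b) (feasible E k) \<noteq> 0" by linarith
  qed
  show ?thesis unfolding nash_def by (intro continuous_intros pc gc pos)
qed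

lemma nash_fix:
  fixes A :: "'a set" and \<pi> Q :: "'a \<Rightarrow> real"
  assumes A: "finite A" and nn: "\<forall>a\<in>A. 0 \<le> \<pi> a" and s1: "sum \<pi> A = 1"
    and fx: "\<forall>a\<in>A. \<pi> a = (\<pi> a + max 0 (Q a - V)) / (1 + (\<Sum>a'\<in>A. max 0 (Q a' - V)))"
    and V: "V = (\<Sum>a\<in>A. \<pi> a * Q a)"
  shows "\<forall>a\<in>A. Q a \<le> V"
proof -
  define G where "G = (\<Sum>a'\<in>A. max 0 (Q a' - V))"
  have G0: "0 \<le> G" unfolding G_def by (intro sum_nonneg) auto
  have d: "1 + G \<noteq> 0" using G0 by linarith
  have eq: "\<pi> a * G = max 0 (Q a - V)" if "a \<in> A" for a
  proof -
    have "\<pi> a = (\<pi> a + max 0 (Q a - V)) / (1 + G)"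
      using fx that unfolding G_def by auto
    then have "\<pi> a * (1 + G) = \<pi> a + max 0 (Q a - V)"
      using d by (simp add: eq_divide_eq)
    then show ?thesis by (simp add: algebra_simps)
  qed
  show ?thesis
  proof (cases "G = 0")
    case True
    then have "\<forall>a\<in>A. max 0 (Q a - V) = 0"
      using sum_nonneg_eq_0_iff[OF A, of "\<lambda>a. max 0 (Q a - V)"] unfolding G_def by auto
    then show ?thesis by (auto simp: max_def split: if_splits)
  next
    case False
    then have Gp: "G > 0" using G0 by simp
    have pos: "0 < \<pi> a * (Q a - V)" if "0 < \<pi> a" "a \<in> A" for a
    proof -
      have "0 < \<pi> a * G" using that Gp by simp
      then have "0 < max 0 (Q a - V)" using eq[OF that(2)] by simp
      then have "0 < Q a - V" by (simp add: max_def split: if_splits)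
      then show ?thesis using that by simp
    qed
    have ge: "0 \<le> \<pi> a * (Q a - V)" if "a \<in> A" for a
    proof (cases "\<pi> a = 0")
      case True then show ?thesis by simp
    next
      case False then have "0 < \<pi> a" using nn that by (metis order_le_less)
      then show ?thesis using pos that by (simp add: order_less_imp_le)
    qed
    obtain a0 where a0: "a0 \<in> A" "0 < \<pi> a0"
    proof (rule ccontr)
      assume "\<not> thesis"
      have "\<forall>a\<in>A. \<pi> a = 0"
      proof
        fix a assume a: "a \<in> A"
        have "\<not> 0 < \<pi> a" using that a \<open>\<not> thesis\<close> by blast
        then show "\<pi> a = 0" using nn a by force
      qed
      then have "sum \<pi> A = 0" by simp
      then show False using s1 by simp
    qed
    have "0 < (\<Sum>a\<in>A. \<pi> a * (Q a - V))"
      using sum_pos2[of A a0 "\<lambda>a. \<pi> a * (Q a - V)", OF A a0(1) pos[OF a0(2) a0(1)]] ge by auto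
    also have "(\<Sum>a\<in>A. \<pi> a * (Q a - V)) = V - V * sum \<pi> A"
      using V by (simp add: algebra_simps sum_subtractf sum_distrib_right)
    finally show ?thesis using s1 by simp
  qed
qed


lemma feas_fin: "finite (feasible E k)"
  by (rule finite_subset[OF subset_UNIV]) simp

lemma feas_ne: "feasible E k \<noteq> {}"
  using nbr_refl bdry_ne unfolding feasible_def by (cases k) auto

lemma Omega_props:
  assumes "\<pi> \<in> Omega E"
  shows "0 \<le> \<pi> t k b a" "a \<notin> feasible E k \<Longrightarrow> \<pi> t k b a = 0"
    "(\<Sum>a\<in>feasible E k. \<pi> t k b a) = 1" "\<pi> t k b a \<le> 1" "polnn \<pi>"
proof -
  show nn: "0 \<le> \<pi> t k b a" using assms unfolding Omega_def by auto
  show "a \<notin> feasible E k \<Longrightarrow> \<pi> t k b a = 0" using assms unfolding Omega_def by auto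
  show s: "(\<Sum>a\<in>feasible E k. \<pi> t k b a) = 1" using assms unfolding Omega_def by auto
  show "polnn \<pi>" using assms unfolding Omega_def polnn_def by auto
  show "\<pi> t k b a \<le> 1"
  proof (cases "a \<in> feasible E k")
    case True
    have "\<pi> t k b a \<le> (\<Sum>a\<in>feasible E k. \<pi> t k b a)"
      by (rule member_le_sum[OF True]) (use assms in \<open>auto simp: Omega_def\<close>)
    then show ?thesis using s by simp
  next
    case False then show ?thesis using assms unfolding Omega_def by auto
  qed
qed

lemma nash_props:
  assumes "\<pi> \<in> Omega E"
  shows "0 \<le> nash \<pi> t k b a" "a \<in> feasible E k \<Longrightarrow> nash \<pi> t k b a \<le> 1"
    "(\<Sum>a\<in>feasible E k. nash \<pi> t k b a) = 1"
proof -
  define G where "G = (\<Sum>a'\<in>feasible E k. gain \<pi> t k b a')"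
  have G0: "0 \<le> G" unfolding G_def by (intro sum_nonneg gain_nonneg)
  have nd: "nash \<pi> t k b a = (\<pi> t k b a + gain \<pi> t k b a) / (1 + G)" for a
    unfolding nash_def G_def by simp
  show "0 \<le> nash \<pi> t k b a" unfolding nd using G0 Omega_props[OF assms] gain_nonneg by simp
  show "nash \<pi> t k b a \<le> 1" if a: "a \<in> feasible E k"
  proof -
    have "gain \<pi> t k b a \<le> G" unfolding G_def by (rule member_le_sum[OF a gain_nonneg feas_fin])
    then have "\<pi> t k b a + gain \<pi> t k b a \<le> 1 + G" using Omega_props(4)[OF assms, of t k b a] by linarith
    then show ?thesis unfolding nd using G0 by simp
  qed
  have "(\<Sum>a\<in>feasible E k. nash \<pi> t k b a) = (\<Sum>a\<in>feasible E k. \<pi> t k b a + gain \<pi> t k b a) / (1 + G)"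
    unfolding nd by (simp add: sum_divide_distrib)
  also have "\<dots> = (1 + G) / (1 + G)"
    unfolding sum.distrib Omega_props(3)[OF assms] G_def by simp
  also have "\<dots> = 1" using G0 by simp
  finally show "(\<Sum>a\<in>feasible E k. nash \<pi> t k b a) = 1" .
qed

definition pi0 :: "('z,'l) policy" where
  "pi0 t k b a = (if a \<in> feasible E k then 1 / real (card (feasible E k)) else 0)"

lemma pi0_Omega: "pi0 \<in> Omega E"
proof -
  have c: "card (feasible E k) > 0" for k using feas_fin feas_ne by (simp add: card_gt_0_iff)
  show ?thesis unfolding Omega_def pi0_def using c feas_ne by auto
qed

definition Win :: "(nat \<times> ('z,'l) loc \<times> nat \<times> ('z,'l) loc) set" where
  "Win = {(t,k,b,a). t < horizon E \<and> b \<le> Bmax E \<and> a \<in> feasible E k}"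

lemma Win_fin: "finite Win"
proof -
  have "Win \<subseteq> {..<horizon E} \<times> (UNIV \<times> ({..Bmax E} \<times> UNIV))" unfolding Win_def by auto
  then show ?thesis by (rule finite_subset) (intro finite_cartesian_product; simp)
qed


lemma optimal:
  assumes ps: "ps \<in> Omega E"
    and QV: "\<And>t k b a. t < horizon E \<Longrightarrow> b \<le> Bmax E \<Longrightarrow> a \<in> feasible E k \<Longrightarrow> Qs ps t k b a \<le> Vs ps t k b"
  shows "is_MFE E ps"
proof -
  define ys where "ys = fst (mu E ps)"
  define zs where "zs = snd (mu E ps)"
  have mu: "mu E ps = (ys, zs)" unfolding ys_def zs_def by simp
  have ny: "nonneg3 ys" and nz: "nonneg3 zs" using mu_nonneg[OF Omega_props(5)[OF ps] mu] by auto
  have Vs_eq: "Vs ps t k b = Wval E d ps ys zs t k b" if "t < horizon E" "horizon E - t \<le> d" for t k b d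
  proof -
    have "Wval E d ps ys zs t k b = Wval E (Suc (horizon E)) ps ys zs t k b"
      by (rule Wval_stab) (use that in auto)
    also have "\<dots> = Vs ps t k b"
      using that unfolding Vs_def Qs_def ys_def zs_def by simp
    finally show ?thesis by simp
  qed
  have main: "Wval E d p' ys zs t k b \<le> Wval E d ps ys zs t k b"
    if p': "p' \<in> Omega E" and "b \<le> Bmax E" "horizon E \<le> t + d" for p' d t k b
    using that(2,3)
  proof (induction d arbitrary: t k b)
    case 0
    then show ?case by simp
  next
    case (Suc d)
    show ?case
    proof (cases "horizon E \<le> t")
      case True then show ?thesis by simp
    next
      case False
      then have tH: "t < horizon E" by simp
      have step: "p' t k b a * Qval E (Wval E d p' ys zs) ys zs t k b a \<le> p' t k b a * Vs ps t k b"
        if a: "a \<in> feasible E k" for a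
      proof (rule mult_left_mono)
        show "0 \<le> p' t k b a" using Omega_props(1)[OF p'] .
        have "Qval E (Wval E d p' ys zs) ys zs t k b a \<le> Qval E (Wval E d ps ys zs) ys zs t k b a"
          by (rule Qval_mono[OF Suc.prems(1) Wval_vanish Wval_vanish _ ny nz])
             (rule Suc.IH, use Suc.prems in auto)
        also have "\<dots> = Qval E (Wval E (horizon E) ps ys zs) ys zs t k b a"
          by (rule Qval_cong) (rule Wval_stab, use Suc.prems in auto)
        also have "\<dots> = Qs ps t k b a" unfolding Qs_def ys_def zs_def by simp
        also have "\<dots> \<le> Vs ps t k b" by (rule QV[OF tH Suc.prems(1) a])
        finally show "Qval E (Wval E d p' ys zs) ys zs t k b a \<le> Vs ps t k b" .
      qed
      have "Wval E (Suc d) p' ys zs t k b = (\<Sum>a\<in>feasible E k. p' t k b a * Qval E (Wval E d p' ys zs) ys zs t k b a)"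
        using tH by simp
      also have "\<dots> \<le> (\<Sum>a\<in>feasible E k. p' t k b a * Vs ps t k b)"
        by (rule sum_mono) (rule step)
      also have "\<dots> = Vs ps t k b"
        using Omega_props(3)[OF p'] by (simp add: sum_distrib_right[symmetric])
      also have "\<dots> = Wval E (Suc d) ps ys zs t k b"
        by (rule Vs_eq) (use tH Suc.prems in auto)
      finally show ?thesis .
    qed
  qed
  show ?thesis
    unfolding is_MFE_def
  proof (intro conjI ballI ps)
    fix p' assume p': "p' \<in> Omega E"
    show "Vrho E p' (mu E ps) \<le> Vrho E ps (mu E ps)"
      unfolding mu Vrho_def
      by (simp only: prod.case) (intro sum_mono mult_left_mono main[OF p'], use rho_nonneg in auto)
  qed
qed


lemma coord_cont: "continuous_on S (\<lambda>x::nat \<Rightarrow> real. x i)"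
  by (rule continuous_on_subset[OF continuous_on_product_coordinates]) simp

lemma exists_MFE: "\<exists>ps. is_MFE E ps"
proof -
  define N where "N = card Win"
  obtain e where e: "bij_betw e {0..<N} Win"
    using ex_bij_betw_nat_finite[OF Win_fin] unfolding N_def by blast
  define idx where "idx = inv_into {0..<N} e"
  have idx1: "idx w < N" "e (idx w) = w" if "w \<in> Win" for w
  proof -
    have "w \<in> e ` {0..<N}" using e that by (simp add: bij_betw_def)
    then show "idx w < N" "e (idx w) = w" unfolding idx_def
      using inv_into_into[of w e "{0..<N}"] f_inv_into_f[of w e "{0..<N}"] by auto
  qed
  have idx2: "e i \<in> Win" "idx (e i) = i" if "i < N" for i
    using e that unfolding idx_def bij_betw_def by auto
  have winI: "(t,k,b,a) \<in> Win" if "t < horizon E" "b \<le> Bmax E" "a \<in> feasible E k" for t k b a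
    using that unfolding Win_def by auto
  define D where "D = {x::nat\<Rightarrow>real. (\<forall>i<N. 0 \<le> x i \<and> x i \<le> 1) \<and> (\<forall>i\<ge>N. x i = 0)}"
  define \<sigma> where "\<sigma> x t k b = (\<Sum>a\<in>feasible E k. x (idx (t,k,b,a)))" for x :: "nat \<Rightarrow> real" and t k b
  define dec where "dec x t k b a = (if t < horizon E \<and> b \<le> Bmax E then
      (if a \<in> feasible E k then x (idx (t,k,b,a)) / max 1 (\<sigma> x t k b)
          + max 0 (1 - \<sigma> x t k b) / real (card (feasible E k)) else 0)
      else pi0 t k b a)" for x :: "nat \<Rightarrow> real" and t k b a
  have cpos: "0 < real (card (feasible E k))" for k using feas_fin feas_ne by (simp add: card_gt_0_iff)
  have dec_Omega: "dec x \<in> Omega E" if x: "x \<in> D" for x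
    unfolding Omega_def
  proof (intro CollectI allI conjI impI)
    fix t k b
    show "(\<Sum>a\<in>feasible E k. dec x t k b a) = 1"
    proof (cases "t < horizon E \<and> b \<le> Bmax E")
      case True
      have s0: "0 \<le> \<sigma> x t k b" unfolding \<sigma>_def
        using x idx1 winI True unfolding D_def by (intro sum_nonneg) auto
      have "(\<Sum>a\<in>feasible E k. dec x t k b a) =
             (\<Sum>a\<in>feasible E k. x (idx (t,k,b,a)) / max 1 (\<sigma> x t k b)
                + max 0 (1 - \<sigma> x t k b) / real (card (feasible E k)))"
        using True unfolding dec_def by (intro sum.cong) auto
      also have "\<dots> = \<sigma> x t k b / max 1 (\<sigma> x t k b) + max 0 (1 - \<sigma> x t k b)"
        using cpos[of k] feas_ne[of k] unfolding sum.distrib \<sigma>_def by (simp add: sum_divide_distrib)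
      also have "\<dots> = 1" by (cases "1 \<le> \<sigma> x t k b") (auto simp: max_def)
      finally show ?thesis .
    next
      case False
      have "dec x t k b a = pi0 t k b a" for a unfolding dec_def by (simp only: if_not_P[OF False])
      then show ?thesis using Omega_props(3)[OF pi0_Omega] by simp
    qed
    fix a
    show "0 \<le> dec x t k b a"
    proof (cases "t < horizon E \<and> b \<le> Bmax E \<and> a \<in> feasible E k")
      case True
      have s0: "0 \<le> \<sigma> x t k b" unfolding \<sigma>_def
        using x idx1 winI True unfolding D_def by (intro sum_nonneg) auto
      have "0 \<le> x (idx (t,k,b,a))" using x idx1 winI True unfolding D_def by auto
      then show ?thesis using True s0 cpos[of k] unfolding dec_def by auto
    next
      case False
      then show ?thesis unfolding dec_def using Omega_props(1)[OF pi0_Omega] by auto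
    qed
    show "a \<notin> feasible E k \<Longrightarrow> dec x t k b a = 0"
      unfolding dec_def using Omega_props(2)[OF pi0_Omega] by auto
  qed
  have dec_nn: "\<forall>x\<in>D. polnn (dec x)" using dec_Omega Omega_props(5) by blast
  have dec_cont: "polcont D dec"
    unfolding polcont_def
  proof (intro allI)
    fix t k b a
    show "continuous_on D (\<lambda>x. dec x t k b a)"
      unfolding dec_def \<sigma>_def
      by (intro continuous_intros coord_cont) (auto simp: max_def)
  qed
  define F where "F x = (\<lambda>i. if i < N then nash (dec x) (fst (e i)) (fst (snd (e i)))
                     (fst (snd (snd (e i)))) (snd (snd (snd (e i)))) else 0)" for x
  have Fc: "continuous_on D F"
    unfolding F_def
    by (intro continuous_on_coordinatewise_then_product cont_if nash_cont[OF dec_cont dec_nn]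
              continuous_on_const)
  have Fin: "F x \<in> D" if "x \<in> D" for x
  proof -
    have "0 \<le> F x i \<and> F x i \<le> 1" if "i < N" for i
    proof -
      obtain t k b a where ei: "e i = (t,k,b,a)" by (metis prod_cases4)
      have "a \<in> feasible E k" using idx2(1)[OF that] ei unfolding Win_def by auto
      then show ?thesis unfolding F_def using that ei nash_props[OF dec_Omega[OF \<open>x \<in> D\<close>]] by auto
    qed
    then show ?thesis unfolding D_def F_def by auto
  qed
  obtain xs where xs: "xs \<in> D" "F xs = xs"
    using brouwer_nat[of N F] Fc Fin unfolding D_def by blast
  define ps where "ps = dec xs"
  have ps: "ps \<in> Omega E" unfolding ps_def by (rule dec_Omega[OF xs(1)])
  have xfix: "xs (idx (t,k,b,a)) = nash ps t k b a"
    if "t < horizon E" "b \<le> Bmax E" "a \<in> feasible E k" for t k b a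
  proof -
    have w: "(t,k,b,a) \<in> Win" by (rule winI[OF that])
    have "xs (idx (t,k,b,a)) = F xs (idx (t,k,b,a))" using xs(2) by simp
    also have "\<dots> = nash ps t k b a" unfolding F_def ps_def using idx1[OF w] by simp
    finally show ?thesis .
  qed
  have psfix: "ps t k b a = nash ps t k b a"
    if tb: "t < horizon E" "b \<le> Bmax E" and a: "a \<in> feasible E k" for t k b a
  proof -
    have "\<sigma> xs t k b = (\<Sum>a\<in>feasible E k. nash ps t k b a)"
      unfolding \<sigma>_def using xfix[OF tb] by (intro sum.cong) auto
    also have "\<dots> = 1" by (rule nash_props(3)[OF ps])
    finally have s1: "\<sigma> xs t k b = 1" .
    have "ps t k b a = xs (idx (t,k,b,a))" unfolding ps_def dec_def using tb a s1 by simp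
    then show ?thesis using xfix[OF tb a] by simp
  qed
  have QV: "Qs ps t k b a \<le> Vs ps t k b"
    if tb: "t < horizon E" "b \<le> Bmax E" and a: "a \<in> feasible E k" for t k b a
  proof -
    have "\<forall>a\<in>feasible E k. Qs ps t k b a \<le> Vs ps t k b"
    proof (rule nash_fix[OF feas_fin])
      show "\<forall>a\<in>feasible E k. 0 \<le> ps t k b a" using Omega_props(1)[OF ps] by auto
      show "sum (ps t k b) (feasible E k) = 1" using Omega_props(3)[OF ps] by simp
      show "Vs ps t k b = (\<Sum>a\<in>feasible E k. ps t k b a * Qs ps t k b a)" unfolding Vs_def ..
      show "\<forall>a\<in>feasible E k. ps t k b a = (ps t k b a + max 0 (Qs ps t k b a - Vs ps t k b)) /
              (1 + (\<Sum>a'\<in>feasible E k. max 0 (Qs ps t k b a' - Vs ps t k b)))"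
        using psfix[OF tb] unfolding nash_def gain_def by auto
    qed
    then show ?thesis using a by auto
  qed
  show ?thesis using optimal[OF ps QV] by blast
qed

end

theorem proposition1:
  fixes E :: "('z::finite, 'l::finite, 'th) eriver"
  assumes eff_pos: "0 < eff E"
    and fleet_pos: "0 < fleet E"
    and tz_pos: "\<forall>i j. 0 < tz E i j"
    and tl_pos: "\<forall>i l. 0 < tl E i l"
    and nbr_refl: "\<forall>i. i \<in> nbr E i"
    and nbr_sym: "\<forall>i j. j \<in> nbr E i \<longleftrightarrow> i \<in> nbr E j"
    and bdry_ne: "\<forall>l. bdry E l \<noteq> {}"
    and dem_nonneg: "\<forall>t i. 0 \<le> dem E t i"
    and alpha_nonneg: "\<forall>t i j. 0 \<le> alpha E t i j"
    and alpha_sum: "\<forall>t i. (\<Sum>j\<in>UNIV. alpha E t i j) = 1"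
    and f_range: "\<forall>q y th. 0 \<le> q \<longrightarrow> 0 \<le> y \<longrightarrow> 0 \<le> fmeet E q y th \<and> fmeet E q y th \<le> 1"
    and f_mono_q: "\<forall>q q' y th. 0 \<le> q \<longrightarrow> q \<le> q' \<longrightarrow> 0 \<le> y \<longrightarrow> fmeet E q y th \<le> fmeet E q' y th"
    and f_antimono_y: "\<forall>q y y' th. 0 \<le> q \<longrightarrow> 0 \<le> y \<longrightarrow> y \<le> y' \<longrightarrow> fmeet E q y' th \<le> fmeet E q y th"
    and g_range: "\<forall>t h \<omega>. h \<in> hist_dom E t \<longrightarrow> 0 \<le> gwait E t h \<omega> \<and> gwait E t h \<omega> \<le> 1"
    and g_pmf: "\<forall>t h. h \<in> hist_dom E t \<longrightarrow> (\<lambda>\<omega>. gwait E t h \<omega>) sums 1"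
    and rho_nonneg: "\<forall>k b. 0 \<le> rho E k b"
    and rho_supp: "\<forall>k b. Bmax E < b \<longrightarrow> rho E k b = 0"
    and rho_sum: "(\<Sum>k\<in>UNIV. \<Sum>b\<in>{0..Bmax E}. rho E k b) = 1"
    and f_cont: "\<forall>q th. 0 \<le> q \<longrightarrow> continuous_on {0..} (\<lambda>y. fmeet E q y th)"
    and g_cont: "\<forall>t \<omega>. continuous_on (hist_dom E t) (\<lambda>h. gwait E t h \<omega>)"
  shows "\<exists>\<pi>s. is_MFE E \<pi>s"
proof -
  interpret erv E
    by (rule erv.intro[OF eff_pos fleet_pos tz_pos tl_pos nbr_refl bdry_ne dem_nonneg alpha_nonneg
          f_range g_range g_pmf rho_nonneg f_cont g_cont])
  show ?thesis by (rule exists_MFE)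
qed

end
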